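(* Let $\mu$ be a probability measure and $\omega\ge0$ a weight with $\int\omega\,d\mu<\infty$. Assume there is $C>0$ such that $\inf_c\int|g-c|\,\omega\,d\mu\le C\int\sqrt{\Gamma(g)}\,d\mu$ for all $g\in\mathcal A$. Let $G(s)=\inf\{u:\mu(\omega\le u)>s\}$ for $s\in(0,1)$. Then for all $s\in(0,1)$ with $G(s)>0$ and all $g\in\mathcal A$, $$\inf_{c\in\mathbb R}\int|g-c|\,d\mu\le\frac{C}{G(s)}\int\sqrt{\Gamma(g)}\,d\mu+s\,\mathrm{Osc}_\mu(g),$$ where $\mathrm{Osc}_\mu(g)=\operatorname{ess\,sup}g-\operatorname{ess\,inf}g$.
   Context: Standing framework: $E$ Polish, $\mu$ a probability measure on $E$, $L$ a $\mu$-symmetric diffusion operator with an algebra $\mathcal A$ of bounded functions and carré du champ $\Gamma(f)=\Gamma(f,f)=\frac12(L(f^2)-2fLf)\ge0$. (Model case $E=\mathbb R^n$, $\Gamma(f)=|\nabla f|^2$.) *)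

theory Defs
  imports "HOL-Probability.Probability"
begin

definition carre_du_champ :: "(('a \<Rightarrow> real) \<Rightarrow> 'a \<Rightarrow> real) \<Rightarrow> ('a \<Rightarrow> real) \<Rightarrow> 'a \<Rightarrow> real" where
  "carre_du_champ L f x = (L (\<lambda>y. (f y)\<^sup>2) x - 2 * f x * L f x) / 2"

definition diffusion_framework ::
  "('a::polish_space) measure \<Rightarrow> (('a \<Rightarrow> real) \<Rightarrow> 'a \<Rightarrow> real) \<Rightarrow> ('a \<Rightarrow> real) set \<Rightarrow> bool" where
  "diffusion_framework M L A \<longleftrightarrow>
     prob_space M \<and> sets M = sets borel \<and>
     (\<forall>c. (\<lambda>_. c) \<in> A) \<and>
     (\<forall>f\<in>A. \<forall>g\<in>A. (\<lambda>x. f x + g x) \<in> A \<and> (\<lambda>x. f x * g x) \<in> A) \<and>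
     (\<forall>c. \<forall>f\<in>A. (\<lambda>x. c * f x) \<in> A) \<and>
     (\<forall>f\<in>A. f \<in> borel_measurable M \<and> (\<exists>B. \<forall>x\<in>space M. \<bar>f x\<bar> \<le> B)) \<and>
     (\<forall>f\<in>A. integrable M (L f)) \<and>
     (\<forall>f\<in>A. \<forall>g\<in>A. (\<integral>x. f x * L g x \<partial>M) = (\<integral>x. g x * L f x \<partial>M)) \<and>
     (\<forall>f\<in>A. \<forall>x\<in>space M. carre_du_champ L f x \<ge> 0) \<and>
     (\<forall>f\<in>A. \<forall>\<phi> \<phi>' \<phi>''.
        (\<forall>t. (\<phi> has_real_derivative \<phi>' t) (at t)) \<and>
        (\<forall>t. (\<phi>' has_real_derivative \<phi>'' t) (at t)) \<and>
        continuous_on UNIV \<phi>'' \<and> (\<phi> \<circ> f) \<in> A \<longrightarrow>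
        (AE x in M. L (\<phi> \<circ> f) x = \<phi>' (f x) * L f x + \<phi>'' (f x) * carre_du_champ L f x))"

text \<open>Oscillation: ess sup g - ess inf g, with ess inf g = - ess sup (-g).\<close>
definition osc :: "'a measure \<Rightarrow> ('a \<Rightarrow> real) \<Rightarrow> ereal" where
  "osc M g = esssup M (\<lambda>x. ereal (g x)) + esssup M (\<lambda>x. ereal (- g x))"

definition quantile_G :: "'a measure \<Rightarrow> ('a \<Rightarrow> real) \<Rightarrow> real \<Rightarrow> real" where
  "quantile_G M w s = Inf {u. measure M {x \<in> space M. w x \<le> u} > s}"

end

theory Submission
  imports Defs
begin

lemma INF_aff_ennreal:
  fixes f :: "real \<Rightarrow> ennreal"
  shows "(INF c. ennreal a * f c + b) = ennreal a * (INF c. f c) + b"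
proof -
  have co: "continuous_on UNIV (\<lambda>y::ennreal. ennreal a * y + b)"
    by (intro continuous_on_add continuous_on_const ennreal_continuous_on_cmult) auto
  have "(\<lambda>y::ennreal. ennreal a * y + b) (Inf (range f)) = (INF s\<in>range f. ennreal a * s + b)"
  proof (rule continuous_at_Inf_mono)
    show "continuous (at_right (Inf (range f))) (\<lambda>y::ennreal. ennreal a * y + b)"
      using co by (simp add: continuous_on_eq_continuous_within continuous_at_imp_continuous_at_within)
  qed (auto intro!: monoI add_right_mono mult_left_mono)
  then show ?thesis by (simp add: image_comp)
qed

theorem mainTheorem11:
  fixes M :: "('a::polish_space) measure"
    and L :: "('a \<Rightarrow> real) \<Rightarrow> 'a \<Rightarrow> real"
    and A :: "('a \<Rightarrow> real) set"
    and w :: "'a \<Rightarrow> real" and C s :: real and g :: "'a \<Rightarrow> real"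
  assumes frame: "diffusion_framework M L A"
    and w_meas: "w \<in> borel_measurable M"
    and w_nonneg: "\<And>x. x \<in> space M \<Longrightarrow> w x \<ge> 0"
    and w_int: "integrable M w"
    and C_pos: "C > 0"
    and hyp: "\<And>f. f \<in> A \<Longrightarrow>
        (INF c::real. \<integral>\<^sup>+ x. ennreal (\<bar>f x - c\<bar> * w x) \<partial>M)
          \<le> ennreal C * (\<integral>\<^sup>+ x. ennreal (sqrt (carre_du_champ L f x)) \<partial>M)"
    and s: "0 < s" "s < 1"
    and G_pos: "quantile_G M w s > 0"
    and g: "g \<in> A"
  shows "(INF c::real. \<integral>\<^sup>+ x. ennreal \<bar>g x - c\<bar> \<partial>M)
          \<le> ennreal (C / quantile_G M w s) * (\<integral>\<^sup>+ x. ennreal (sqrt (carre_du_champ L g x)) \<partial>M)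
             + ennreal (s * real_of_ereal (osc M g))"
proof -
  define G where "G = quantile_G M w s"
  interpret prob_space M using frame unfolding diffusion_framework_def by auto
  have gm: "g \<in> borel_measurable M" using frame g unfolding diffusion_framework_def by auto
  obtain B where B: "\<And>x. x \<in> space M \<Longrightarrow> \<bar>g x\<bar> \<le> B"
  proof -
    have "\<exists>B. \<forall>x\<in>space M. \<bar>g x\<bar> \<le> B"
      using frame g unfolding diffusion_framework_def by blast
    then show ?thesis using that by blast
  qed
  define Ms where "Ms = esssup M (\<lambda>x. ereal (g x))"
  define ms where "ms = esssup M (\<lambda>x. ereal (- g x))"
  have AE1: "AE x in M. ereal (g x) \<le> Ms" unfolding Ms_def by (rule esssup_AE)
  have AE2: "AE x in M. ereal (- g x) \<le> ms" unfolding ms_def by (rule esssup_AE)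
  have Msu: "Ms \<le> ereal B" unfolding Ms_def
    by (rule esssup_I) (use gm B in \<open>auto intro!: AE_I2 simp: abs_le_iff\<close>)
  have msu: "ms \<le> ereal B" unfolding ms_def
    by (rule esssup_I) (use gm B in \<open>auto intro!: AE_I2 simp: abs_le_iff\<close>)
  have Msl: "ereal (- B) \<le> Ms"
  proof -
    have "AE x in M. ereal (- B) \<le> Ms" using AE1 AE_space
    proof eventually_elim
      case (elim x)
      then show ?case using B[of x] by (auto simp: abs_le_iff intro: order_trans[rotated])
    qed
    then show ?thesis by simp
  qed
  have msl: "ereal (- B) \<le> ms"
  proof -
    have "AE x in M. ereal (- B) \<le> ms" using AE2 AE_space
    proof eventually_elim
      case (elim x)
      then show ?case using B[of x] by (auto simp: abs_le_iff intro: order_trans[rotated])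
    qed
    then show ?thesis by simp
  qed
  define Mr where "Mr = real_of_ereal Ms"
  define mr where "mr = - real_of_ereal ms"
  have MsE: "Ms = ereal Mr" unfolding Mr_def using Msu Msl by (cases Ms) auto
  have msE: "ms = ereal (- mr)" unfolding mr_def using msu msl by (cases ms) auto
  have AEg: "AE x in M. mr \<le> g x \<and> g x \<le> Mr" using AE1 AE2
    by eventually_elim (auto simp: MsE msE)
  define Osc where "Osc = Mr - mr"
  have oscE: "real_of_ereal (osc M g) = Osc"
    unfolding osc_def Osc_def by (simp flip: Ms_def ms_def add: MsE msE)
  have mrMr: "mr \<le> Mr"
  proof -
    have "AE x in M. mr \<le> Mr" using AEg by eventually_elim auto
    then show ?thesis by simp
  qed
  have Osc_nonneg: "Osc \<ge> 0" using mrMr Osc_def by simp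
  define S where "S = {u. measure M {x \<in> space M. w x \<le> u} > s}"
  have G_S: "G = Inf S" unfolding G_def quantile_G_def S_def ..
  have bddS: "bdd_below S"
  proof (rule bdd_belowI)
    fix u assume "u \<in> S"
    show "0 \<le> u"
    proof (rule ccontr)
      assume "\<not> 0 \<le> u"
      then have "{x \<in> space M. w x \<le> u} = {}" using w_nonneg by force
      then have "measure M {x \<in> space M. w x \<le> u} = 0" by (simp only: measure_empty)
      then show False using \<open>u \<in> S\<close> s unfolding S_def by simp
    qed
  qed
  have below: "measure M {x \<in> space M. w x \<le> u} \<le> s" if "u < G" for u
  proof (rule ccontr)
    assume "\<not> ?thesis"
    then have "u \<in> S" unfolding S_def by simp
    then have "G \<le> u" unfolding G_S by (rule cInf_lower[OF _ bddS])
    then show False using that by simp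
  qed
  define An where "An = (\<lambda>n::nat. {x \<in> space M. w x \<le> G - 1 / Suc n})"
  have An_sets: "range An \<subseteq> sets M" unfolding An_def using w_meas by auto
  have An_inc: "incseq An"
  proof (rule monoI)
    fix n m :: nat assume "n \<le> m"
    then have "1 / real (Suc m) \<le> 1 / real (Suc n)" by (intro divide_left_mono) auto
    then show "An n \<le> An m" unfolding An_def by auto
  qed
  have Wset: "{x \<in> space M. w x < G} = (\<Union> (range An))"
  proof
    show "{x \<in> space M. w x < G} \<subseteq> \<Union> (range An)"
    proof
      fix x assume x: "x \<in> {x \<in> space M. w x < G}"
      then have "0 < G - w x" by simp
      then obtain n where "1 / real (Suc n) < G - w x"
        by (metis nat_approx_posE)
      then have "x \<in> An n" using x unfolding An_def by auto
      then show "x \<in> \<Union> (range An)" by blast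
    qed
  next
    show "\<Union> (range An) \<subseteq> {x \<in> space M. w x < G}"
    proof
      fix x assume "x \<in> \<Union> (range An)"
      then obtain n where "x \<in> An n" by blast
      then have xs: "x \<in> space M" and le: "w x \<le> G - 1 / real (Suc n)" unfolding An_def by auto
      have "1 / real (Suc n) > 0" by simp
      with le have "w x < G" by linarith
      with xs show "x \<in> {x \<in> space M. w x < G}" by simp
    qed
  qed
  have Wmeas: "emeasure M {x \<in> space M. w x < G} \<le> ennreal s"
  proof -
    have "emeasure M {x \<in> space M. w x < G} = (SUP n. emeasure M (An n))"
      unfolding Wset using SUP_emeasure_incseq[OF An_sets An_inc] by simp
    also have "\<dots> \<le> ennreal s"
    proof (rule SUP_least)
      fix n
      have "emeasure M (An n) = ennreal (measure M (An n))" by (simp add: emeasure_eq_measure)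
      also have "\<dots> \<le> ennreal s" unfolding An_def
        by (intro ennreal_leI below) simp
      finally show "emeasure M (An n) \<le> ennreal s" .
    qed
    finally show ?thesis .
  qed
  define I where "I = (\<lambda>c. \<integral>\<^sup>+ x. ennreal (\<bar>g x - c\<bar> * w x) \<partial>M)"
  define W where "W = {x \<in> space M. w x < G}"
  have Wsets: "W \<in> sets M" unfolding W_def using w_meas by auto
  have Gpos: "G > 0" using G_pos G_def by simp
  have est: "(\<integral>\<^sup>+ x. ennreal \<bar>g x - c\<bar> \<partial>M) \<le> ennreal (1 / G) * I c + ennreal Osc * ennreal s"
    if c: "mr \<le> c" "c \<le> Mr" for c
  proof -
    have "(\<integral>\<^sup>+ x. ennreal \<bar>g x - c\<bar> \<partial>M)
        \<le> (\<integral>\<^sup>+ x. ennreal (1 / G) * ennreal (\<bar>g x - c\<bar> * w x) + ennreal Osc * indicator W x \<partial>M)"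
    proof (rule nn_integral_mono_AE)
      show "AE x in M. ennreal \<bar>g x - c\<bar>
          \<le> ennreal (1 / G) * ennreal (\<bar>g x - c\<bar> * w x) + ennreal Osc * indicator W x"
        using AEg AE_space
      proof eventually_elim
        case (elim x)
        show ?case
        proof (cases "x \<in> W")
          case True
          have "\<bar>g x - c\<bar> \<le> Osc" using elim c Osc_def by auto
          then have "ennreal \<bar>g x - c\<bar> \<le> ennreal Osc * indicator W x"
            using True by (simp add: ennreal_leI)
          then show ?thesis by (simp add: add_increasing)
        next
          case False
          with elim have "G \<le> w x" unfolding W_def by auto
          then have "\<bar>g x - c\<bar> \<le> (1 / G) * (\<bar>g x - c\<bar> * w x)"
            using Gpos by (simp add: field_simps mult_right_mono)
          then have "ennreal \<bar>g x - c\<bar> \<le> ennreal (1 / G) * ennreal (\<bar>g x - c\<bar> * w x)"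
          proof -
            have "0 \<le> \<bar>g x - c\<bar> * w x" using Gpos \<open>G \<le> w x\<close> by simp
            then have "ennreal (1 / G) * ennreal (\<bar>g x - c\<bar> * w x) = ennreal ((1 / G) * (\<bar>g x - c\<bar> * w x))"
              using Gpos by (subst ennreal_mult) auto
            then show ?thesis using \<open>\<bar>g x - c\<bar> \<le> (1 / G) * (\<bar>g x - c\<bar> * w x)\<close>
              by (simp only:) (rule ennreal_leI)
          qed
          then show ?thesis by (simp add: add_increasing2)
        qed
      qed
    qed
    also have "\<dots> = ennreal (1 / G) * I c + ennreal Osc * emeasure M W"
      unfolding I_def
      using gm w_meas Wsets
      by (subst nn_integral_add) (auto simp: nn_integral_cmult nn_integral_cmult_indicator)
    also have "\<dots> \<le> ennreal (1 / G) * I c + ennreal Osc * ennreal s"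
      using Wmeas unfolding W_def by (intro add_left_mono mult_left_mono) auto
    finally show ?thesis .
  qed
  have clamp: "I (max mr (min Mr c)) \<le> I c" for c
    unfolding I_def
  proof (rule nn_integral_mono_AE)
    show "AE x in M. ennreal (\<bar>g x - max mr (min Mr c)\<bar> * w x) \<le> ennreal (\<bar>g x - c\<bar> * w x)"
      using AEg AE_space
    proof eventually_elim
      case (elim x)
      then have "\<bar>g x - max mr (min Mr c)\<bar> \<le> \<bar>g x - c\<bar>" using mrMr by auto
      then show ?case using w_nonneg[OF \<open>x \<in> space M\<close>]
        by (intro ennreal_leI mult_right_mono) auto
    qed
  qed
  have key: "(INF c::real. \<integral>\<^sup>+ x. ennreal \<bar>g x - c\<bar> \<partial>M) \<le> ennreal (1 / G) * I c + ennreal Osc * ennreal s" for c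
  proof -
    let ?c = "max mr (min Mr c)"
    have "(INF c::real. \<integral>\<^sup>+ x. ennreal \<bar>g x - c\<bar> \<partial>M) \<le> (\<integral>\<^sup>+ x. ennreal \<bar>g x - ?c\<bar> \<partial>M)"
      by (rule INF_lower) simp
    also have "\<dots> \<le> ennreal (1 / G) * I ?c + ennreal Osc * ennreal s"
      using mrMr by (intro est) auto
    also have "\<dots> \<le> ennreal (1 / G) * I c + ennreal Osc * ennreal s"
      using clamp by (intro add_right_mono mult_left_mono) auto
    finally show ?thesis .
  qed
  have "(INF c::real. \<integral>\<^sup>+ x. ennreal \<bar>g x - c\<bar> \<partial>M)
       \<le> (INF c. ennreal (1 / G) * I c + ennreal Osc * ennreal s)"
    by (rule INF_greatest) (rule key)
  also have "\<dots> = ennreal (1 / G) * (INF c. I c) + ennreal Osc * ennreal s"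
    by (rule INF_aff_ennreal)
  also have "\<dots> \<le> ennreal (1 / G) * (ennreal C * (\<integral>\<^sup>+ x. ennreal (sqrt (carre_du_champ L g x)) \<partial>M))
      + ennreal Osc * ennreal s"
    using hyp[OF g] unfolding I_def by (intro add_right_mono mult_left_mono) auto
  also have "\<dots> = ennreal (C / quantile_G M w s) * (\<integral>\<^sup>+ x. ennreal (sqrt (carre_du_champ L g x)) \<partial>M)
             + ennreal (s * real_of_ereal (osc M g))"
  proof -
    have e1: "ennreal (1 / G) * (ennreal C * X) = ennreal (C / G) * X" for X
      using Gpos C_pos by (simp add: mult.assoc[symmetric] ennreal_mult[symmetric])
    have e2: "ennreal Osc * ennreal s = ennreal (s * Osc)"
      using Osc_nonneg s by (simp add: ennreal_mult[symmetric] mult.commute)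
    show ?thesis unfolding oscE G_def[symmetric] e1 e2 ..
  qed
  finally show ?thesis .
qed

end
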